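(* For any $x\in\mathbb{R}^n$ and $\widehat{\mathbf{A}}=(\mathbf{A}_1,\dots,\mathbf{A}_n)\in I(\mathbb{R})^n$, \[x^T\odot\widehat{\mathbf{A}}\preceq\|x\|\odot\big[\|\widehat{\mathbf{A}}\|_{I(\mathbb{R})^n},\|\widehat{\mathbf{A}}\|_{I(\mathbb{R})^n}\big].\]
   Context: $I(\mathbb{R})$: nonempty compact intervals $\mathbf{A}=[\underline{a},\overline{a}]$; $\mathbf{A}\oplus\mathbf{B}=[\underline{a}+\underline{b},\overline{a}+\overline{b}]$; $\lambda\odot\mathbf{A}=[\min\{\lambda\underline{a},\lambda\overline{a}\},\max\{\lambda\underline{a},\lambda\overline{a}\}]$; $x^T\odot\widehat{\mathbf{A}}=\bigoplus_{i=1}^n x_i\odot\mathbf{A}_i$; $\mathbf{A}\preceq\mathbf{B}$ iff $\underline{a}\le\underline{b}$ and $\overline{a}\le\overline{b}$; $\|\mathbf{A}\|_{I(\mathbb{R})}=\max\{|\underline{a}|,|\overline{a}|\}$; $\|\widehat{\mathbf{A}}\|_{I(\mathbb{R})^n}=\sqrt{\sum_i\|\mathbf{A}_i\|_{I(\mathbb{R})}^2}$; $\|x\|$ Euclidean norm. *)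

theory Defs
  imports "HOL-Analysis.Analysis"
begin

text \<open>Compact intervals [a_lo, a_hi] are represented as pairs (a_lo, a_hi) with a_lo \<le> a_hi.\<close>

type_synonym ival = "real \<times> real"

definition is_ival :: "ival \<Rightarrow> bool" where
  "is_ival A \<longleftrightarrow> fst A \<le> snd A"

definition iadd :: "ival \<Rightarrow> ival \<Rightarrow> ival" where
  "iadd A B = (fst A + fst B, snd A + snd B)"

definition iscale :: "real \<Rightarrow> ival \<Rightarrow> ival" where
  "iscale l A = (min (l * fst A) (l * snd A), max (l * fst A) (l * snd A))"

text \<open>Finite interval sum (iterated iadd, starting from [0,0]).\<close>
definition isum :: "('i \<Rightarrow> ival) \<Rightarrow> 'i set \<Rightarrow> ival" where
  "isum f S = (\<Sum>i\<in>S. fst (f i), \<Sum>i\<in>S. snd (f i))"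

definition ivec_dot :: "real ^ 'n \<Rightarrow> (ival ^ 'n) \<Rightarrow> ival" where
  "ivec_dot x A = isum (\<lambda>i. iscale (x $ i) (A $ i)) UNIV"

definition ile :: "ival \<Rightarrow> ival \<Rightarrow> bool" where
  "ile A B \<longleftrightarrow> fst A \<le> fst B \<and> snd A \<le> snd B"

definition inorm :: "ival \<Rightarrow> real" where
  "inorm A = max \<bar>fst A\<bar> \<bar>snd A\<bar>"

definition ivec_norm :: "ival ^ 'n \<Rightarrow> real" where
  "ivec_norm A = sqrt (\<Sum>i\<in>UNIV. (inorm (A $ i))^2)"

end

theory Submission
  imports Defs
begin

lemma sc_bound:
  "max \<bar>fst (iscale l P)\<bar> \<bar>snd (iscale l P)\<bar> \<le> \<bar>l\<bar> * inorm P"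
proof -
  have a: "\<bar>l * fst P\<bar> \<le> \<bar>l\<bar> * inorm P"
    unfolding inorm_def abs_mult by (intro mult_left_mono) auto
  have b: "\<bar>l * snd P\<bar> \<le> \<bar>l\<bar> * inorm P"
    unfolding inorm_def abs_mult by (intro mult_left_mono) auto
  have "fst (iscale l P) = l * fst P \<or> fst (iscale l P) = l * snd P"
    unfolding iscale_def min_def by simp
  moreover have "snd (iscale l P) = l * fst P \<or> snd (iscale l P) = l * snd P"
    unfolding iscale_def max_def by simp
  ultimately show ?thesis using a b by (metis max.bounded_iff)
qed

theorem mainTheorem12:
  fixes x :: "real ^ 'n" and A :: "ival ^ 'n"
  assumes "\<forall>i. is_ival (A $ i)"
  shows "ile (ivec_dot x A) (iscale (norm x) (ivec_norm A, ivec_norm A))"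
proof -
  define u :: "real ^ 'n" where "u = (\<chi> i. \<bar>x $ i\<bar>)"
  define b :: "real ^ 'n" where "b = (\<chi> i. inorm (A $ i))"
  have nu: "norm u = norm x"
    unfolding u_def norm_vec_def by simp
  have nb: "norm b = ivec_norm A"
    unfolding b_def norm_vec_def ivec_norm_def L2_set_def by simp
  have cs: "(\<Sum>i\<in>UNIV. \<bar>x $ i\<bar> * inorm (A $ i)) \<le> norm x * ivec_norm A"
  proof -
    have "(\<Sum>i\<in>UNIV. \<bar>x $ i\<bar> * inorm (A $ i)) = u \<bullet> b"
      unfolding u_def b_def inner_vec_def by simp
    also have "\<dots> \<le> norm u * norm b" by (rule norm_cauchy_schwarz)
    finally show ?thesis using nu nb by simp
  qed
  have f: "(\<Sum>i\<in>UNIV. fst (iscale (x $ i) (A $ i))) \<le> norm x * ivec_norm A"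
  proof -
    have "(\<Sum>i\<in>UNIV. fst (iscale (x $ i) (A $ i))) \<le> (\<Sum>i\<in>UNIV. \<bar>x $ i\<bar> * inorm (A $ i))"
      apply (rule sum_mono)
      using sc_bound by (smt (verit))
    with cs show ?thesis by linarith
  qed
  have s: "(\<Sum>i\<in>UNIV. snd (iscale (x $ i) (A $ i))) \<le> norm x * ivec_norm A"
  proof -
    have "(\<Sum>i\<in>UNIV. snd (iscale (x $ i) (A $ i))) \<le> (\<Sum>i\<in>UNIV. \<bar>x $ i\<bar> * inorm (A $ i))"
      apply (rule sum_mono)
      using sc_bound by (smt (verit))
    with cs show ?thesis by linarith
  qed
  show ?thesis
    unfolding ile_def ivec_dot_def isum_def
    using f s by (simp add: iscale_def)
qed

end
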